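(* Let $\rho>1$, let $f$ be analytic inside and on the Bernstein ellipse $\mathcal{E}_\rho$, and let $M=\max_{z\in\mathcal{E}_\rho}|f(z)|$. Then the Legendre coefficients $a_n^L=(n+\tfrac12)\int_{-1}^1f(x)P_n(x)\,dx$ satisfy, for all $n\ge1$, \[ |a_n^L|\le\frac{\Lambda(n,\rho,\tfrac12)}{\sqrt{\rho^2-1}}\frac{\sqrt n}{\rho^n}, \] where \[ \Lambda(n,\rho,\tfrac12)=\frac{\Gamma(\tfrac12)M\Upsilon_n^{1,1/2}}{\pi}\left[2\left(\rho+\frac1\rho\right)+2\left(\frac\pi2-1\right)\left(\rho-\frac1\rho\right)\right], \] and $\Upsilon_n^{a,b}=\exp\!\left(\frac{a-b}{2(n+b-1)}+\frac{1}{12(n+a-1)}+\frac{(a-1)(a-b)}{n}\right)$.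
   Context: $P_n$ is the Legendre polynomial of degree $n$ (normalized by $P_n(1)=1$). $\mathcal{E}_\rho=\{\tfrac12(\rho e^{i\theta}+\rho^{-1}e^{-i\theta}):0\le\theta\le2\pi\}$ is the Bernstein ellipse. *)

theory Defs
  imports "HOL-Analysis.Analysis"
begin

fun legendreP :: "nat \<Rightarrow> real \<Rightarrow> real" where
  "legendreP 0 x = 1"
| "legendreP (Suc 0) x = x"
| "legendreP (Suc (Suc n)) x =
     ((2 * real n + 3) * x * legendreP (Suc n) x - (real n + 1) * legendreP n x) / (real n + 2)"

definition bernstein_ellipse :: "real \<Rightarrow> complex set" where
  "bernstein_ellipse \<rho> =
     (\<lambda>\<theta>. (of_real \<rho> * exp (\<i> * of_real \<theta>) + of_real (1/\<rho>) * exp (- \<i> * of_real \<theta>)) / 2)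
       ` {0..2*pi}"

text \<open>Closed region bounded by E_rho (inside and on E_rho): union of E_r, 1 <= r <= rho
  (E_1 is the segment [-1,1]).\<close>
definition bernstein_region :: "real \<Rightarrow> complex set" where
  "bernstein_region \<rho> = (\<Union>r\<in>{1..\<rho>}. bernstein_ellipse r)"

definition legendre_coeff :: "(complex \<Rightarrow> complex) \<Rightarrow> nat \<Rightarrow> complex" where
  "legendre_coeff f n =
     of_real (real n + 1/2) * integral {-1..1} (\<lambda>x::real. f (of_real x) * of_real (legendreP n x))"

definition Upsilon :: "nat \<Rightarrow> real \<Rightarrow> real \<Rightarrow> real" where
  "Upsilon n a b = exp ((a - b) / (2 * (real n + b - 1)) + 1 / (12 * (real n + a - 1))
                        + (a - 1) * (a - b) / real n)"

definition Lambda_half :: "nat \<Rightarrow> real \<Rightarrow> real \<Rightarrow> real" where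
  "Lambda_half n \<rho> M = Gamma (1/2) * M * Upsilon n 1 (1/2) / pi *
     (2 * (\<rho> + 1/\<rho>) + 2 * (pi/2 - 1) * (\<rho> - 1/\<rho>))"

end

theory Submission
  imports Defs "HOL-Complex_Analysis.Complex_Analysis"
begin


definition alpha :: "nat \<Rightarrow> real" where
  "alpha j = (-1)^j * ((-1/2::real) gchoose j)"

fun beta :: "nat \<Rightarrow> real" where
  "beta 0 = 2"
| "beta (Suc m) = beta m * (2 * real m + 2) / (2 * real m + 3)"

lemma alpha_0[simp]: "alpha 0 = 1" by (simp add: alpha_def)

lemma alpha_Suc: "alpha (Suc j) = alpha j * (2 * real j + 1) / (2 * real j + 2)"
proof -
  have h: "(-1/2::real) * ((-1/2) gchoose j) = real j * ((-1/2) gchoose j) + real (Suc j) * ((-1/2) gchoose (Suc j))"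
    by (rule gbinomial_mult_1)
  have h2: "real (Suc j) * ((-1/2::real) gchoose (Suc j)) = (-1/2 - real j) * ((-1/2) gchoose j)"
    using h by (simp add: algebra_simps)
  have "((-1/2::real) gchoose (Suc j)) = (-1/2 - real j) / real (Suc j) * ((-1/2) gchoose j)"
    using h2 by (simp add: field_simps)
  also have "(-1/2 - real j) / real (Suc j) = - ((2 * real j + 1) / (2 * real j + 2))"
    by (simp add: field_simps)
  finally show ?thesis by (simp add: alpha_def)
qed

lemma alpha_pos: "alpha j > 0"
  by (induction j) (simp_all add: alpha_Suc)

lemma beta_pos: "beta m > 0"
  by (induction m) simp_all

lemma beta_mono: "beta (m + j) \<le> beta m"
proof (induction j)
  case (Suc j)
  have "beta (m + Suc j) = beta (m+j) * ((2 * real (m+j) + 2) / (2 * real (m+j) + 3))" by simp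
  also have "\<dots> \<le> beta (m+j) * 1"
    using beta_pos[of "m+j"] by (intro mult_left_mono) auto
  finally show ?case using Suc by simp
qed simp

lemma pos3: "2 * real j + 1 > 0" "2 * real j + 2 > 0" "2 * real j + 3 > 0" by auto

lemma canc3: "(a::real) \<noteq> 0 \<Longrightarrow> b \<noteq> 0 \<Longrightarrow> 2/a*(a/b)*(b/c) = 2/c" by simp

lemma alpha_beta_same: "alpha j * beta j = 2 / (2 * real j + 1)"
proof (induction j)
  case (Suc j)
  have "alpha (Suc j) * beta (Suc j) = (alpha j * beta j) * ((2 * real j + 1) / (2 * real j + 2)) * ((2 * real j + 2) / (2 * real j + 3))"
    by (simp add: alpha_Suc field_simps)
  also have "\<dots> = 2 / (2 * real j + 1) * ((2 * real j + 1) / (2 * real j + 2)) * ((2 * real j + 2) / (2 * real j + 3))"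
    using Suc by simp
  also have "\<dots> = 2 / (2 * real j + 3)"
    using pos3[of j] by (metis canc3 less_irrefl)
  also have "2 * real j + 3 = 2 * real (Suc j) + 1" by simp
  finally show ?case by (simp only:)
qed simp

definition C :: "nat \<Rightarrow> nat \<Rightarrow> real" where
  "C n k = (if n < k \<and> odd (k - n) then alpha ((k - n - 1) div 2) * beta ((k + n - 1) div 2) else 0)"

lemma C_0: "C 0 k = (if odd k then 2 / real k else 0)"
proof (cases "odd k")
  case True
  then obtain j where k: "k = 2*j+1" using oddE by blast
  then show ?thesis using alpha_beta_same[of j] by (simp add: C_def)
qed (auto simp: C_def)

lemma aux1: "(p::real) \<noteq> 0 \<Longrightarrow> p + 2 \<noteq> 0 \<Longrightarrow> 2/p*((p+1)/(p+2)) = (2/(p+2) + 2/p)/2"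
  by (simp add: divide_simps)

lemma C_1: assumes k1: "k \<ge> 1" shows "C 1 k = (C 0 (k+1) + C 0 (k-1)) / 2"
proof (cases "even k \<and> k \<ge> 2")
  case True
  define j where "j = k div 2 - 1"
  have k: "k = 2*j+2" using True unfolding j_def by presburger
  have "C 1 k = alpha j * beta (j+1)" using k by (simp add: C_def)
  also have "\<dots> = alpha j * beta j * ((2 * real j + 2) / (2 * real j + 3))" by simp
  also have "\<dots> = 2 / (2 * real j + 1) * (((2 * real j + 1) + 1) / ((2 * real j + 1) + 2))"
    by (simp add: alpha_beta_same algebra_simps)
  also have "\<dots> = (2 / ((2 * real j + 1) + 2) + 2 / (2 * real j + 1)) / 2"
    by (rule aux1) (use pos3[of j] in auto)
  also have "\<dots> = (2 / (2*real j + 3) + 2 / (2 * real j + 1)) / 2"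
    by (simp add: algebra_simps)
  also have "\<dots> = (C 0 (k+1) + C 0 (k-1)) / 2"
    using k by (simp add: C_0 add.commute)
  finally show ?thesis .
next
  case False
  then show ?thesis using k1
    by (cases k) (auto simp: C_def C_0)
qed

lemma C_form: "C n (n + 1 + 2*j) = alpha j * beta (n + j)"
  by (simp add: C_def)

lemma C_zero: assumes H: "\<And>j. k \<noteq> n + 1 + 2*j" shows "C n k = 0"
proof -
  have "\<not> (n < k \<and> odd (k - n))"
  proof
    assume a: "n < k \<and> odd (k - n)"
    then have "k = n + 1 + 2*((k - n - 1) div 2)" by presburger
    then show False using H by blast
  qed
  then show ?thesis unfolding C_def by (rule if_not_P)
qed

lemma C_zero0: "C n 0 = 0" by (simp add: C_def)

lemma rec_aux0:
  fixes p q N :: real assumes "p \<noteq> 0" "q \<noteq> 0" "q = 2*N+p+3"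
  shows "(2*N+3)/2 * ((p-1)/p * ((q-1)/q) + 1) - (N+1) * ((p-1)/p) = (N+2) * ((q-1)/q)"
  using assms by (simp add: divide_simps) (simp add: algebra_simps)

lemma rec_aux:
  fixes J N :: real assumes "J \<ge> 0" "N \<ge> 0"
  shows "(2*N+3)/2 * ((2*J+1)/(2*J+2) * ((2*(N+J+1)+2)/(2*(N+J+1)+3)) + 1) - (N+1) * ((2*J+1)/(2*J+2))
       = (N+2) * ((2*(N+J+1)+2)/(2*(N+J+1)+3))"
  using rec_aux0[of "2*J+2" "2*(N+J+1)+3" N] assms by (simp add: algebra_simps)

lemma C_rec:
  assumes k1: "k \<ge> 1"
  shows "C (n+2) k = ((2 * real n + 3) / 2 * (C (n+1) (k+1) + C (n+1) (k-1)) - (real n + 1) * C n k) / (real n + 2)"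
proof -
  consider (main) j where "k = n + 3 + 2*j" | (first) "k = n + 1" | (other) "\<And>j. k \<noteq> n + 3 + 2*j" "k \<noteq> n + 1"
    by blast
  then show ?thesis
  proof cases
    case main
    have k1': "k = (n+2) + 1 + 2*j" "k+1 = (n+1)+1+2*(Suc j)" "k-1 = (n+1)+1+2*j" "k = n+1+2*(Suc j)"
      using main by auto
    have e1: "C (n+2) k = alpha j * beta (n+2+j)" unfolding k1'(1) by (rule C_form)
    have e2: "C (n+1) (k+1) = alpha (Suc j) * beta (n+1+Suc j)" unfolding k1'(2) by (rule C_form)
    have e3: "C (n+1) (k-1) = alpha j * beta (n+1+j)" unfolding k1'(3) by (rule C_form)
    have e4: "C n k = alpha (Suc j) * beta (n+Suc j)" unfolding k1'(4) by (rule C_form)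
    have bb: "n+2+j = Suc (n+j+1)" "n+1+Suc j = Suc (n+j+1)" "n+1+j = n+j+1" "n + Suc j = n+j+1" by auto
    define A where "A = alpha j"
    define B where "B = beta (n+j+1)"
    define r where "r = (2*real j+1)/(2*real j+2)"
    define s where "s = (2*(real n+real j+1)+2)/(2*(real n+real j+1)+3)"
    have aS: "alpha (Suc j) = A * r" unfolding A_def r_def by (simp add: alpha_Suc)
    have bS: "beta (Suc (n+j+1)) = B * s" unfolding B_def s_def
      by (simp add: algebra_simps)
    have key: "(2*real n+3)/2 * (r * s + 1) - (real n+1) * r = (real n+2) * s"
      unfolding r_def s_def by (rule rec_aux) auto
    have "((2 * real n + 3) / 2 * (C (n+1) (k+1) + C (n+1) (k-1)) - (real n + 1) * C n k)
        = A * B * ((2*real n+3)/2 * (r * s + 1) - (real n+1) * r)"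
      unfolding e2 e3 e4 bb aS bS A_def[symmetric] B_def[symmetric] by (simp add: algebra_simps)
    also have "\<dots> = A * B * s * (real n + 2)" using key by simp
    finally show ?thesis unfolding e1 bb bS A_def[symmetric] by simp
  next
    case first
    have e2: "C (n+1) (k+1) = beta (n+1)"
      using C_form[of "n+1" 0] first by simp
    have e3: "C (n+1) (k-1) = 0" using first by (intro C_zero) auto
    have e4: "C n k = beta n" using C_form[of n 0] first by simp
    have e1: "C (n+2) k = 0" using first by (intro C_zero) auto
    have "(2 * real n + 3) / 2 * beta (n+1) = (real n + 1) * beta n"
      by (simp add: divide_simps) (simp add: algebra_simps)
    then show ?thesis unfolding e1 e2 e3 e4 by simp
  next
    case other
    have o2: "k \<noteq> n + 1 + 2*j" for j
    proof (cases j)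
      case 0 then show ?thesis using other(2) by simp
    next
      case (Suc i) then show ?thesis using other(1)[of i] by simp
    qed
    have "C (n+2) k = 0"
    proof (rule C_zero)
      fix j show "k \<noteq> n + 2 + 1 + 2*j" using other(1)[of j] by simp
    qed
    moreover have "C (n+1) (k+1) = 0"
    proof (rule C_zero)
      fix j show "k + 1 \<noteq> n + 1 + 1 + 2*j" using o2[of j] by simp
    qed
    moreover have "C (n+1) (k-1) = 0"
    proof (rule C_zero)
      fix j show "k - 1 \<noteq> n + 1 + 1 + 2*j" using other(1)[of j] k1 by simp
    qed
    moreover have "C n k = 0" by (rule C_zero) (rule o2)
    ultimately show ?thesis by simp
  qed
qed

lemma legendreP_cont2: "continuous_on S (legendreP n) \<and> continuous_on S (legendreP (Suc n))"
proof (induction n)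
  case (Suc n) then show ?case by (auto intro!: continuous_intros)
qed (auto intro!: continuous_intros)

lemma legendreP_cont: "continuous_on S (legendreP n)"
  using legendreP_cont2 by blast

lemma legendreP_cont_cos: "continuous_on S (\<lambda>x. legendreP n (cos x))"
  by (rule continuous_on_compose2[OF legendreP_cont[of UNIV]]) (auto intro!: continuous_intros)

lemma sin_integ: "(\<lambda>\<phi>. sin (real k * \<phi>)) integrable_on {0..pi}"
  by (intro integrable_continuous_real continuous_intros)

lemma lin_aux: "(c::real) * S = (A + B) / 2 \<Longrightarrow> (X * c * p1 - Y * p0) / Z * S = (X / 2 * (p1 * A + p1 * B) - Y * (p0 * S)) / Z"
proof -
  assume h: "c * S = (A + B) / 2"
  have "p1 * (A + B) = p1 * (2 * (c * S))" using h by simp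
  then have "p1 * A + p1 * B = 2 * (p1 * (c * S))" by (simp add: algebra_simps)
  then show ?thesis by (simp add: algebra_simps)
qed

definition e :: "nat \<Rightarrow> nat \<Rightarrow> real" where
  "e n k = integral {0..pi} (\<lambda>\<phi>. legendreP n (cos \<phi>) * sin (real k * \<phi>))"

lemma G_int: "(\<lambda>\<phi>. legendreP n (cos \<phi>) * sin (real k * \<phi>)) integrable_on {0..pi}"
  by (intro integrable_continuous_real continuous_intros legendreP_cont_cos)

lemma sin_int: "((\<lambda>\<phi>. sin (real k * \<phi>)) has_integral (if odd k then 2 / real k else 0)) {0..pi}"
proof (cases "k = 0")
  case True then show ?thesis by simp
next
  case False
  have "((\<lambda>\<phi>. sin (real k * \<phi>)) has_integral ((- cos (real k * pi) / real k) - (- cos (real k * 0) / real k))) {0..pi}"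
    by (rule fundamental_theorem_of_calculus)
       (use False in \<open>auto intro!: derivative_eq_intros simp: has_real_derivative_iff_has_vector_derivative[symmetric]\<close>)
  moreover have "(- cos (real k * pi) / real k) - (- cos (real k * 0) / real k) = (if odd k then 2 / real k else 0)"
    by (auto simp: field_simps)
  ultimately show ?thesis by simp
qed

lemma e0: "e 0 k = C 0 k"
  using sin_int[of k] unfolding e_def C_0 by (simp add: integral_unique)

lemma cos_sin_prod: "k \<ge> 1 \<Longrightarrow> cos \<phi> * sin (real k * \<phi>) = (sin (real (k+1) * \<phi>) + sin (real (k-1) * \<phi>)) / 2"
proof -
  assume k: "k \<ge> 1"
  have a: "real (k+1) * \<phi> = real k * \<phi> + \<phi>" by (simp add: algebra_simps)
  have b: "real (k-1) * \<phi> = real k * \<phi> - \<phi>" using k by (simp add: of_nat_diff algebra_simps)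
  show ?thesis unfolding a b sin_add sin_diff by (simp add: algebra_simps)
qed

lemma e_zero: "e n 0 = 0" by (simp add: e_def)

lemma e_has: "((\<lambda>\<phi>. legendreP n (cos \<phi>) * sin (real k * \<phi>)) has_integral e n k) {0..pi}"
  unfolding e_def by (rule integrable_integral[OF G_int])

lemma e1: assumes k: "k \<ge> 1" shows "e 1 k = (e 0 (k+1) + e 0 (k-1)) / 2"
proof -
  have "((\<lambda>\<phi>. (legendreP 0 (cos \<phi>) * sin (real (k+1) * \<phi>) + legendreP 0 (cos \<phi>) * sin (real (k-1) * \<phi>)) / 2)
      has_integral ((e 0 (k+1) + e 0 (k-1)) / 2)) {0..pi}"
    by (intro has_integral_divide has_integral_add e_has)
  then have "((\<lambda>\<phi>. legendreP 1 (cos \<phi>) * sin (real k * \<phi>)) has_integral ((e 0 (k+1) + e 0 (k-1)) / 2)) {0..pi}"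
    by (rule has_integral_eq[rotated]) (use cos_sin_prod[OF k] in simp)
  then show ?thesis unfolding e_def by (rule integral_unique)
qed

lemma e_rec: assumes k: "k \<ge> 1"
  shows "e (n+2) k = ((2 * real n + 3) / 2 * (e (n+1) (k+1) + e (n+1) (k-1)) - (real n + 1) * e n k) / (real n + 2)"
proof -
  let ?G = "\<lambda>n k \<phi>. legendreP n (cos \<phi>) * sin (real k * \<phi>)"
  have "((\<lambda>\<phi>. ((2 * real n + 3) / 2 * (?G (n+1) (k+1) \<phi> + ?G (n+1) (k-1) \<phi>) - (real n + 1) * ?G n k \<phi>) / (real n + 2))
     has_integral (((2 * real n + 3) / 2 * (e (n+1) (k+1) + e (n+1) (k-1)) - (real n + 1) * e n k) / (real n + 2))) {0..pi}"
    by (intro has_integral_divide has_integral_diff has_integral_mult_right has_integral_add e_has)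
  then have "(?G (n+2) k has_integral (((2 * real n + 3) / 2 * (e (n+1) (k+1) + e (n+1) (k-1)) - (real n + 1) * e n k) / (real n + 2))) {0..pi}"
  proof (rule has_integral_eq[rotated])
    fix \<phi>
    have h: "legendreP (n+2) (cos \<phi>) = ((2 * real n + 3) * cos \<phi> * legendreP (n+1) (cos \<phi>) - (real n + 1) * legendreP n (cos \<phi>)) / (real n + 2)"
      by (simp add: numeral_2_eq_2)
    show "((2 * real n + 3) / 2 * (?G (n+1) (k+1) \<phi> + ?G (n+1) (k-1) \<phi>) - (real n + 1) * ?G n k \<phi>) / (real n + 2) = ?G (n+2) k \<phi>"
      unfolding h by (rule lin_aux[OF cos_sin_prod[OF k, of \<phi>], symmetric])
  qed
  then show ?thesis unfolding e_def by (rule integral_unique)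
qed

lemma e_eq_C: "e n k = C n k"
proof (induction n arbitrary: k rule: less_induct)
  case (less n)
  have "n = 0 \<or> n = 1 \<or> (\<exists>m. n = m + 2)" by presburger
  then consider "n = 0" | "n = 1" | m where "n = m + 2" by blast
  then show ?case
  proof cases
    case 1 then show ?thesis by (simp add: e0)
  next
    case 2 show ?thesis
    proof (cases "k = 0")
      case True then show ?thesis by (simp add: e_zero C_zero0)
    next
      case False then show ?thesis using e1[of k] C_1[of k] 2 by (simp add: e0)
    qed
  next
    case 3 show ?thesis
    proof (cases "k = 0")
      case True then show ?thesis by (simp add: e_zero C_zero0)
    next
      case False
      then have k1: "k \<ge> 1" by simp
      have ih: "e m j = C m j" "e (m+1) j = C (m+1) j" for j using less 3 by auto
      show ?thesis unfolding 3 e_rec[OF k1, of m] C_rec[OF k1, of m] ih ..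
    qed
  qed
qed


lemma C_nonneg: "C n k \<ge> 0"
  unfolding C_def using alpha_pos beta_pos by (simp add: less_imp_le)

lemma alpha_series: assumes "0 \<le> z" "z < 1" shows "(\<lambda>j. alpha j * z^j) sums ((1 - z) powr (-1/2))"
proof -
  have "(\<lambda>j. ((-1/2::real) gchoose j) * (-z)^j) sums (1 + -z) powr (-1/2)"
    by (rule gen_binomial_real) (use assms in auto)
  moreover have "((-1/2::real) gchoose j) * (-z)^j = alpha j * z^j" for j
  proof -
    have "(-z)^j = (-1)^j * z^j" by (rule power_minus)
    then show ?thesis unfolding alpha_def by (simp only: mult_ac)
  qed
  ultimately show ?thesis by simp
qed

lemma partial_bound:
  assumes s: "0 \<le> s" "s < 1"
  shows "(\<Sum>k<N. s^k * C n k) \<le> beta n * s^(n+1) * (1 - s^2) powr (-1/2)"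
proof -
  define I where "I = (\<lambda>j. n + 1 + 2*j) ` {..<N}"
  define F where "F k = s^k * C n k" for k
  have Fnn: "F k \<ge> 0" for k unfolding F_def using s C_nonneg by simp
  have F0: "F k = 0" if "k \<notin> I" "k < N" for k
  proof -
    have "k \<noteq> n + 1 + 2*j" for j
    proof
      assume "k = n + 1 + 2*j"
      then have "j < N" using that by simp
      then show False using that \<open>k = n + 1 + 2*j\<close> unfolding I_def by blast
    qed
    then show ?thesis unfolding F_def by (simp add: C_zero)
  qed
  have "(\<Sum>k<N. F k) = (\<Sum>k\<in>{..<N} \<inter> I. F k)"
    by (rule sum.mono_neutral_right) (use F0 in auto)
  also have "\<dots> \<le> (\<Sum>k\<in>I. F k)"
    by (rule sum_mono2) (auto simp: I_def Fnn)
  also have "\<dots> = (\<Sum>j<N. F (n + 1 + 2*j))"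
    unfolding I_def by (subst sum.reindex) (auto simp: inj_on_def)
  also have "\<dots> \<le> (\<Sum>j<N. beta n * s^(n+1) * (alpha j * (s^2)^j))"
  proof (rule sum_mono)
    fix j
    have "F (n + 1 + 2*j) = s^(n+1) * (s^2)^j * alpha j * beta (n+j)"
    proof -
      have pw: "s^(n+1+2*j) = s^(n+1)*(s^2)^j" by (simp add: power_add power_mult)
      have "F (n + 1 + 2*j) = s^(n+1+2*j) * (alpha j * beta (n+j))" unfolding F_def C_form by (rule refl)
      then show ?thesis unfolding pw by (simp only: mult_ac)
    qed
    also have "\<dots> \<le> s^(n+1) * (s^2)^j * alpha j * beta n"
      using beta_mono[of n j] alpha_pos[of j] s by (intro mult_left_mono) auto
    finally show "F (n + 1 + 2*j) \<le> beta n * s^(n+1) * (alpha j * (s^2)^j)" by (simp add: mult_ac)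
  qed
  also have "\<dots> = beta n * s^(n+1) * (\<Sum>j<N. alpha j * (s^2)^j)"
    by (simp add: sum_distrib_left)
  also have "\<dots> \<le> beta n * s^(n+1) * (1 - s^2) powr (-1/2)"
  proof (intro mult_left_mono)
    have sm: "(\<lambda>j. alpha j * (s^2)^j) sums ((1 - s^2) powr (-1/2))"
    proof (rule alpha_series)
      have "s * s \<le> s * 1" using s by (intro mult_left_mono) auto
      then show "s^2 < 1" using s by (simp add: power2_eq_square)
    qed simp
    show "(\<Sum>j<N. alpha j * (s^2)^j) \<le> (1 - s^2) powr (-1/2)"
    proof -
      have "(\<Sum>j<N. alpha j * (s^2)^j) \<le> suminf (\<lambda>j. alpha j * (s^2)^j)"
        by (rule sum_le_suminf[OF sums_summable[OF sm]]) (auto intro!: mult_nonneg_nonneg less_imp_le[OF alpha_pos])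
      also have "\<dots> = (1 - s^2) powr (-1/2)" by (rule sums_unique[OF sm, symmetric])
      finally show ?thesis .
    qed
  qed (use beta_pos[of n] s in auto)
  finally show ?thesis unfolding F_def .
qed


lemma cis_sum: "cis x + cis (-x) = 2 * of_real (cos x)"
  by (simp add: complex_eq_iff)
lemma cis_diff: "cis x - cis (-x) = 2 * \<i> * of_real (sin x)"
  by (simp add: complex_eq_iff)
lemma cis_prod: "cis x * cis (-x) = 1"
  by (simp add: cis_mult)

lemma canc_i: "(t::complex) \<noteq> 0 \<Longrightarrow> 2*\<i>*t*S/(2*t*D) = \<i>*(S/D)"
  by (simp add: ac_simps)

lemma kernel_expand:
  fixes t :: complex and \<phi> :: real
  assumes t: "t \<noteq> 0" "norm t < 1"
  shows "of_real (sin \<phi>) / ((1/t + t)/2 - of_real (cos \<phi>))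
     = (\<Sum>k<N. 2 * t^k * of_real (sin (real k * \<phi>)))
       + ((t * cis \<phi>)^N / (1 - t * cis \<phi>) - (t * cis (-\<phi>))^N / (1 - t * cis (-\<phi>))) / \<i>"
proof -
  define a where "a = t * cis \<phi>"
  define b where "b = t * cis (-\<phi>)"
  have na: "norm a = norm t" "norm b = norm t" unfolding a_def b_def by (simp_all add: norm_mult)
  have a1: "1 - a \<noteq> 0" "a \<noteq> 1" using na t by auto
  have b1: "1 - b \<noteq> 0" "b \<noteq> 1" using na t by auto
  have prod: "(1 - a) * (1 - b) = 2 * t * ((1/t + t)/2 - of_real (cos \<phi>))"
  proof -
    have "(1 - a) * (1 - b) = 1 - t * (cis \<phi> + cis (-\<phi>)) + t^2 * (cis \<phi> * cis (-\<phi>))"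
      unfolding a_def b_def by (simp add: algebra_simps power2_eq_square)
    also have "\<dots> = 1 - 2 * t * of_real (cos \<phi>) + t^2" unfolding cis_sum cis_prod by simp
    also have "\<dots> = 2 * t * ((1/t + t)/2 - of_real (cos \<phi>))"
      using t by (simp add: field_simps power2_eq_square)
    finally show ?thesis .
  qed
  have ne: "(1/t + t)/2 - of_real (cos \<phi>) \<noteq> 0"
    using prod a1 b1 by auto
  have amb: "a - b = 2 * \<i> * t * of_real (sin \<phi>)"
    unfolding a_def b_def by (simp add: right_diff_distrib[symmetric] cis_diff mult_ac)
  have lhs: "of_real (sin \<phi>) / ((1/t + t)/2 - of_real (cos \<phi>)) = (1/(1-a) - 1/(1-b)) / \<i>"
  proof -
    have "1/(1-a) - 1/(1-b) = (a - b) / ((1-a)*(1-b))"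
      using a1 b1 by (simp add: field_simps)
    also have "\<dots> = 2 * \<i> * t * of_real (sin \<phi>) / (2 * t * ((1/t + t)/2 - of_real (cos \<phi>)))"
      unfolding amb prod ..
    also have "\<dots> = \<i> * (of_real (sin \<phi>) / ((1/t + t)/2 - of_real (cos \<phi>)))"
      by (rule canc_i[OF t(1)])
    finally show ?thesis by simp
  qed
  have ga: "1/(1-a) = (\<Sum>k<N. a^k) + a^N/(1-a)"
    using a1 by (simp add: sum_gp_strict field_simps)
  have gb: "1/(1-b) = (\<Sum>k<N. b^k) + b^N/(1-b)"
    using b1 by (simp add: sum_gp_strict field_simps)
  have terms: "(a^k - b^k) / \<i> = 2 * t^k * of_real (sin (real k * \<phi>))" for k
  proof -
    have "a^k - b^k = t^k * (cis (real k * \<phi>) - cis (- (real k * \<phi>)))"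
    proof -
      have dm1: "cis \<phi> ^ k = cis (real k * \<phi>)" by (rule Complex.DeMoivre)
      have dm2: "cis (-\<phi>) ^ k = cis (- (real k * \<phi>))" unfolding Complex.DeMoivre by simp
      note dm = dm1 dm2
      show ?thesis unfolding a_def b_def power_mult_distrib dm by (simp add: algebra_simps)
    qed
    also have "\<dots> = \<i> * (2 * t^k * of_real (sin (real k * \<phi>)))" unfolding cis_diff by (simp add: mult_ac)
    finally show ?thesis by simp
  qed
  have "(1/(1-a) - 1/(1-b)) / \<i> = (\<Sum>k<N. (a^k - b^k) / \<i>) + (a^N/(1-a) - b^N/(1-b)) / \<i>"
  proof -
    have s1: "(\<Sum>k<N. (a^k - b^k) / \<i>) = ((\<Sum>k<N. a^k) - (\<Sum>k<N. b^k)) / \<i>"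
      by (simp only: sum_divide_distrib[symmetric] sum_subtractf)
    have r: "((X + A) - (Y + B)) / c = (X - Y) / c + (A - B) / c" for X A Y B c :: complex
      by (simp add: add_divide_distrib[symmetric] algebra_simps)
    show ?thesis unfolding ga gb s1 by (rule r)
  qed
  then have "(1/(1-a) - 1/(1-b)) / \<i> = (\<Sum>k<N. 2 * t^k * of_real (sin (real k * \<phi>))) + (a^N/(1-a) - b^N/(1-b)) / \<i>"
    by (simp only: terms)
  then show ?thesis unfolding lhs a_def b_def .
qed

lemma rem_bound:
  fixes t :: complex
  assumes t: "norm t < 1"
  shows "norm (((t * cis \<phi>)^N / (1 - t * cis \<phi>) - (t * cis (-\<phi>))^N / (1 - t * cis (-\<phi>))) / \<i>)
     \<le> 2 * norm t ^ N / (1 - norm t)"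
proof -
  have one: "norm (c^N / (1 - c)) \<le> norm t ^ N / (1 - norm t)" if c: "norm c = norm t" for c :: complex
  proof -
    have "1 - norm t \<le> norm (1 - c)" using norm_triangle_ineq2[of 1 c] c by (simp add: norm_minus_commute)
    moreover have "1 - norm t > 0" using t by simp
    ultimately show ?thesis
      by (simp add: norm_divide norm_power c frac_le divide_left_mono)
  qed
  have "norm (((t * cis \<phi>)^N / (1 - t * cis \<phi>) - (t * cis (-\<phi>))^N / (1 - t * cis (-\<phi>))) / \<i>)
      \<le> norm ((t * cis \<phi>)^N / (1 - t * cis \<phi>)) + norm ((t * cis (-\<phi>))^N / (1 - t * cis (-\<phi>)))"
    (is "norm ((?A - ?B) / \<i>) \<le> _")
  proof -
    have "norm ((?A - ?B) / \<i>) = norm (?A - ?B)" by (simp add: norm_divide norm_mult)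
    also have "\<dots> \<le> norm ?A + norm ?B" by (rule norm_triangle_ineq4)
    finally show ?thesis .
  qed
  also have "\<dots> \<le> norm t ^ N / (1 - norm t) + norm t ^ N / (1 - norm t)"
    by (intro add_mono one) (simp_all add: norm_mult)
  finally show ?thesis by simp
qed

lemma den_ne:
  fixes t :: complex
  assumes t: "t \<noteq> 0" "norm t < 1"
  shows "(1/t + t)/2 - of_real (cos \<phi>) \<noteq> 0"
proof -
  define a where "a = t * cis \<phi>"
  define b where "b = t * cis (-\<phi>)"
  have na: "norm a = norm t" "norm b = norm t" unfolding a_def b_def by (simp_all add: norm_mult)
  have a1: "1 - a \<noteq> 0" using na t by auto
  have b1: "1 - b \<noteq> 0" using na t by auto
  have "(1 - a) * (1 - b) = 1 - t * (cis \<phi> + cis (-\<phi>)) + t^2 * (cis \<phi> * cis (-\<phi>))"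
    unfolding a_def b_def by (simp add: algebra_simps power2_eq_square)
  also have "\<dots> = 1 - 2 * t * of_real (cos \<phi>) + t^2" unfolding cis_sum cis_prod by simp
  also have "\<dots> = 2 * t * ((1/t + t)/2 - of_real (cos \<phi>))"
    using t by (simp add: field_simps power2_eq_square)
  finally show ?thesis using a1 b1 by auto
qed

lemma kernel_bound:
  fixes t :: complex
  assumes t: "t \<noteq> 0" "norm t < 1"
  shows "norm (integral {0..pi} (\<lambda>\<phi>. of_real (legendreP n (cos \<phi>)) * (of_real (sin \<phi>) / ((1/t+t)/2 - of_real (cos \<phi>)))))
     \<le> 2 * beta n * norm t^(n+1) * (1 - norm t^2) powr (-1/2)"
    (is "norm (integral _ ?Ker) \<le> ?X")
proof -
  define s where "s = norm t"
  have s: "0 < s" "s < 1" using t unfolding s_def by auto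
  have "compact ((\<lambda>\<phi>. legendreP n (cos \<phi>)) ` {0..pi})"
    by (intro compact_continuous_image legendreP_cont_cos compact_Icc)
  then obtain B where B: "B > 0" "\<And>\<phi>. \<phi> \<in> {0..pi} \<Longrightarrow> \<bar>legendreP n (cos \<phi>)\<bar> \<le> B"
    using compact_imp_bounded bounded_pos by (metis image_eqI real_norm_def)
  have cont: "continuous_on {0..pi} ?Ker"
    using den_ne[OF t]
    by (intro continuous_intros continuous_on_compose2[OF continuous_on_of_real legendreP_cont_cos]) auto
  define I where "I = integral {0..pi} ?Ker"
  have Ihas: "(?Ker has_integral I) {0..pi}"
    unfolding I_def by (rule integrable_integral[OF integrable_continuous_real[OF cont]])
  have main: "norm I \<le> ?X + pi * B * (2 * s^N / (1 - s))" for N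
  proof -
    define S where "S = (\<Sum>k<N. 2 * t^k * of_real (e n k))"
    have Shas: "((\<lambda>\<phi>. \<Sum>k<N. 2 * t^k * of_real (legendreP n (cos \<phi>) * sin (real k * \<phi>))) has_integral S) {0..pi}"
      unfolding S_def by (intro has_integral_sum has_integral_mult_right has_integral_of_real e_has) auto
    have Rhas: "((\<lambda>\<phi>. ?Ker \<phi> - (\<Sum>k<N. 2 * t^k * of_real (legendreP n (cos \<phi>) * sin (real k * \<phi>)))) has_integral (I - S)) {0..pi}"
      by (rule has_integral_diff[OF Ihas Shas])
    have Rbd: "norm (I - S) \<le> B * (2 * s^N / (1 - s)) * Henstock_Kurzweil_Integration.content (cbox 0 pi)"
    proof (rule has_integral_bound)
      show "0 \<le> B * (2 * s^N / (1 - s))" using B s by auto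
      show "((\<lambda>\<phi>. ?Ker \<phi> - (\<Sum>k<N. 2 * t^k * of_real (legendreP n (cos \<phi>) * sin (real k * \<phi>)))) has_integral (I - S)) (cbox 0 pi)"
        using Rhas by simp
      fix \<phi> assume ph: "\<phi> \<in> cbox 0 pi"
      have eq: "?Ker \<phi> - (\<Sum>k<N. 2 * t^k * of_real (legendreP n (cos \<phi>) * sin (real k * \<phi>)))
          = of_real (legendreP n (cos \<phi>)) * (((t * cis \<phi>)^N / (1 - t * cis \<phi>) - (t * cis (-\<phi>))^N / (1 - t * cis (-\<phi>))) / \<i>)"
      proof -
        have sdist: "(\<Sum>k<N. 2 * t^k * of_real (legendreP n (cos \<phi>) * sin (real k * \<phi>)))
           = of_real (legendreP n (cos \<phi>)) * (\<Sum>k<N. 2 * t^k * of_real (sin (real k * \<phi>)))"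
          by (simp add: sum_distrib_left mult_ac)
        show ?thesis unfolding kernel_expand[OF t, of \<phi> N] sdist
          by (simp only: distrib_left add_diff_cancel_left')
      qed
      have "norm (of_real (legendreP n (cos \<phi>)) * (((t * cis \<phi>)^N / (1 - t * cis \<phi>) - (t * cis (-\<phi>))^N / (1 - t * cis (-\<phi>))) / \<i>))
          \<le> B * (2 * s^N / (1 - s))"
        unfolding norm_mult s_def using B(2)[of \<phi>] ph rem_bound[OF t(2), of \<phi> N]
        by (intro mult_mono) auto
      then show "norm (?Ker \<phi> - (\<Sum>k<N. 2 * t^k * of_real (legendreP n (cos \<phi>) * sin (real k * \<phi>)))) \<le> B * (2 * s^N / (1 - s))"
        unfolding eq .
    qed
    have Sbd: "norm S \<le> ?X"
    proof -
      have "norm S \<le> (\<Sum>k<N. norm (2 * t^k * of_real (e n k)))"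
        unfolding S_def by (rule norm_sum)
      also have "\<dots> = 2 * (\<Sum>k<N. s^k * C n k)"
        by (simp add: sum_distrib_left norm_mult norm_power s_def e_eq_C C_nonneg mult_ac)
      also have "\<dots> \<le> 2 * (beta n * s^(n+1) * (1 - s^2) powr (-1/2))"
        using partial_bound[of s n N] s by simp
      finally show ?thesis by (simp add: s_def mult_ac)
    qed
    have "norm I \<le> norm S + norm (I - S)" using norm_triangle_ineq[of S "I - S"] by simp
    also have "\<dots> \<le> ?X + B * (2 * s^N / (1 - s)) * pi" using Sbd Rbd by simp
    finally show ?thesis by (simp add: mult_ac)
  qed
  show ?thesis
  proof (rule ccontr)
    assume "\<not> norm (integral {0..pi} ?Ker) \<le> ?X"
    then have d: "norm I - ?X > 0" unfolding I_def by simp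
    define y where "y = (norm I - ?X) * (1 - s) / (2 * pi * B)"
    have "y > 0" unfolding y_def using d s B by (simp add: pi_gt_zero)
    then obtain N where N: "s^N < y" using real_arch_pow_inv[OF _ s(2)] by blast
    have "pi * B * (2 * s^N / (1 - s)) < pi * B * (2 * y / (1 - s))"
      using N s B by (simp add: pi_gt_zero divide_strict_right_mono)
    also have "\<dots> = norm I - ?X" unfolding y_def using s B by (simp add: field_simps)
    finally show False using main[of N] by simp
  qed
qed


definition gamr :: "real \<Rightarrow> real \<Rightarrow> complex" where
  "gamr r \<tau> = (of_real r * exp (\<i> * of_real (2*pi*\<tau>)) + of_real (1/r) * exp (- \<i> * of_real (2*pi*\<tau>))) / 2"

definition gamr' :: "real \<Rightarrow> real \<Rightarrow> complex" where
  "gamr' r \<tau> = \<i> * of_real pi * (of_real r * exp (\<i> * of_real (2*pi*\<tau>)) - of_real (1/r) * exp (- \<i> * of_real (2*pi*\<tau>)))"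

definition tpar :: "real \<Rightarrow> real \<Rightarrow> complex" where
  "tpar r \<tau> = of_real (1/r) * exp (- \<i> * of_real (2*pi*\<tau>))"

lemma gamr_deriv: "(gamr r has_vector_derivative gamr' r \<tau>) (at \<tau> within X)"
proof -
  have "((\<lambda>x. (of_real r * exp (\<i> * (2 * of_real pi * x)) + of_real (1/r) * exp (- \<i> * (2 * of_real pi * x))) / 2)
      has_field_derivative gamr' r \<tau>) (at (of_real \<tau>))"
    unfolding gamr'_def
    by (rule derivative_eq_intros refl | simp)+ (simp add: algebra_simps)
  from has_vector_derivative_real_field[OF this] show ?thesis
    unfolding gamr_def by (simp add: has_vector_derivative_at_within mult_ac)
qed

lemma cont_aux: "continuous_on S (\<lambda>\<tau>::real. (A * exp (\<i> * of_real (2*pi*\<tau>)) + B * exp (- \<i> * of_real (2*pi*\<tau>))) / 2)"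
  by (auto intro!: continuous_intros)

lemma cont_aux': "continuous_on S (\<lambda>\<tau>::real. D * (A * exp (\<i> * of_real (2*pi*\<tau>)) - B * exp (- \<i> * of_real (2*pi*\<tau>))))"
  by (auto intro!: continuous_intros)

lemma gamr_cont: "continuous_on S (gamr r)"
  unfolding gamr_def by (rule cont_aux)

lemma gamr'_cont: "continuous_on S (gamr' r)"
  unfolding gamr'_def by (rule cont_aux')

lemma gamr_ell: "\<tau> \<in> {0..1} \<Longrightarrow> gamr r \<tau> \<in> bernstein_ellipse r"
  unfolding bernstein_ellipse_def gamr_def by (rule image_eqI[where x="2*pi*\<tau>"]) auto

lemma tpar_norm: "r > 0 \<Longrightarrow> norm (tpar r \<tau>) = 1 / r"
proof -
  assume r: "r > 0"
  have "norm (exp (- \<i> * of_real (2*pi*\<tau>))) = 1"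
    using norm_exp_i_times[of "-(2*pi*\<tau>)"] by simp
  then show ?thesis unfolding tpar_def norm_mult using r by (simp add: norm_divide)
qed

lemma gamr_t: "r > 0 \<Longrightarrow> gamr r \<tau> = (1 / tpar r \<tau> + tpar r \<tau>) / 2"
proof -
  assume r: "r > 0"
  have "1 / tpar r \<tau> = of_real r * exp (\<i> * of_real (2*pi*\<tau>))"
    unfolding tpar_def using r by (simp add: exp_minus field_simps)
  then show ?thesis unfolding gamr_def tpar_def by simp
qed

lemma gamr_loop: "gamr r 1 = gamr r 0"
proof -
  have h1: "exp (\<i> * of_real (2*pi)) = 1" by (simp add: exp_eq_1)
  have "exp (- \<i> * of_real (2*pi)) = inverse (exp (\<i> * of_real (2*pi)))"
    by (simp add: exp_minus[symmetric])
  then have "exp (- \<i> * of_real (2*pi)) = 1" using h1 by simp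
  note h1 this
  then show ?thesis unfolding gamr_def by simp
qed

lemma gamr_Re: "Re (gamr r \<tau>) = (r + 1/r) / 2 * cos (2*pi*\<tau>)"
  unfolding gamr_def by (simp add: Re_exp Im_exp field_simps)

lemma gamr_Im: "Im (gamr r \<tau>) = (r - 1/r) / 2 * sin (2*pi*\<tau>)"
  unfolding gamr_def by (simp add: Re_exp Im_exp field_simps)

lemma valid_gamr: "valid_path (gamr r)"
proof -
  have vd: "vector_derivative (gamr r) (at x) = gamr' r x" for x
    using gamr_deriv[of r x UNIV] by (intro vector_derivative_at) simp
  show ?thesis
    unfolding valid_path_def
  proof (intro C1_differentiable_imp_piecewise)
    show "gamr r C1_differentiable_on {0..1}"
      unfolding C1_differentiable_on_eq vd
      using gamr_deriv[of r _ UNIV] gamr'_cont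
      by (auto simp: vector_derivative_works[symmetric] differentiable_def has_vector_derivative_def)
  qed
qed

lemma path_gamr: "path (gamr r)"
  by (rule valid_path_imp_path[OF valid_gamr])

lemma path_image_gamr: "path_image (gamr r) \<subseteq> bernstein_ellipse r"
  unfolding path_image_def using gamr_ell by auto


lemma gamr1_real: "gamr 1 \<tau> = of_real (cos (2*pi*\<tau>))"
  by (simp add: complex_eq_iff gamr_Re gamr_Im)

lemma real_in_ell1: assumes "\<bar>c\<bar> \<le> 1" shows "(of_real c :: complex) \<in> bernstein_ellipse 1"
proof -
  have ac: "0 \<le> arccos c" "arccos c \<le> pi" using assms by (auto intro: arccos_lbound arccos_ubound)
  have "gamr 1 (arccos c / (2*pi)) \<in> bernstein_ellipse 1"
    using ac pi_gt_zero by (intro gamr_ell) (auto simp: divide_simps)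
  moreover have "gamr 1 (arccos c / (2*pi)) = of_real c"
    unfolding gamr1_real using assms by (simp add: cos_arccos_abs)
  ultimately show ?thesis by simp
qed

lemma ell_sub_region: "1 \<le> r \<Longrightarrow> r \<le> \<rho> \<Longrightarrow> bernstein_ellipse r \<subseteq> bernstein_region \<rho>"
  unfolding bernstein_region_def by auto

lemma real_in_region: "\<bar>c\<bar> \<le> 1 \<Longrightarrow> 1 \<le> \<rho> \<Longrightarrow> (of_real c :: complex) \<in> bernstein_region \<rho>"
  using real_in_ell1 ell_sub_region by blast

lemma real_in_seg: assumes "\<bar>c\<bar> \<le> 1" shows "(of_real c :: complex) \<in> closed_segment (-1) 1"
  unfolding closed_segment_def
proof (intro CollectI exI conjI)
  show "of_real c = (1 - (c+1)/2) *\<^sub>R (-1::complex) + ((c+1)/2) *\<^sub>R 1"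
    by (simp add: complex_eq_iff scaleR_conv_of_real field_simps)
qed (use assms in auto)

lemma seg_in_region: assumes "1 \<le> \<rho>" shows "closed_segment (-1::complex) 1 \<subseteq> bernstein_region \<rho>"
proof
  fix z :: complex assume "z \<in> closed_segment (-1) 1"
  then obtain u where u: "0 \<le> u" "u \<le> 1" "z = (1 - u) *\<^sub>R (-1) + u *\<^sub>R 1"
    unfolding closed_segment_def by blast
  then have zz: "z = of_real (2*u - 1)" by (simp add: complex_eq_iff scaleR_conv_of_real)
  have "\<bar>2*u - 1\<bar> \<le> 1" using u by auto
  then have "of_real (2*u - 1) \<in> bernstein_region \<rho>" using real_in_region assms by blast
  then show "z \<in> bernstein_region \<rho>" unfolding zz .
qed

lemma winding_outside:
  assumes rho: "\<rho> > 1" and w: "w \<notin> bernstein_region \<rho>"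
  shows "winding_number (gamr \<rho>) w = 0"
proof -
  define h where "h = (\<lambda>(s::real, \<tau>::real). gamr (\<rho> - s * (\<rho> - 1)) \<tau>)"
  have rs: "1 \<le> \<rho> - s * (\<rho> - 1)" "\<rho> - s * (\<rho> - 1) \<le> \<rho>" if "s \<in> {0..1}" for s
  proof -
    have "s * (\<rho> - 1) \<le> 1 * (\<rho> - 1)" using that rho by (intro mult_right_mono) auto
    moreover have "s * (\<rho> - 1) \<ge> 0" using that rho by auto
    ultimately show "1 \<le> \<rho> - s * (\<rho> - 1)" "\<rho> - s * (\<rho> - 1) \<le> \<rho>" by auto
  qed
  have "homotopic_loops (-{w}) (gamr \<rho>) (gamr 1)"
    unfolding homotopic_loops
  proof (intro exI conjI ballI)
    show "continuous_on ({0..1} \<times> {0..1}) h"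
      unfolding h_def gamr_def case_prod_unfold
      apply (intro continuous_intros)
      using rs by force+
    show "h \<in> {0..1} \<times> {0..1} \<rightarrow> - {w}"
    proof
      fix p assume p: "p \<in> {0..1::real} \<times> {0..1::real}"
      then have "h p \<in> bernstein_ellipse (\<rho> - fst p * (\<rho> - 1))"
        unfolding h_def by (auto intro: gamr_ell simp: case_prod_unfold)
      also have "\<dots> \<subseteq> bernstein_region \<rho>" using rs[of "fst p"] p by (intro ell_sub_region) auto
      finally show "h p \<in> - {w}" using w by auto
    qed
    show "h (0, x) = gamr \<rho> x" for x unfolding h_def by simp
    show "h (1, x) = gamr 1 x" for x unfolding h_def by simp
    show "pathfinish (h \<circ> Pair t) = pathstart (h \<circ> Pair t)" for t
      unfolding h_def pathfinish_def pathstart_def by (simp add: gamr_loop)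
  qed
  then have "winding_number (gamr \<rho>) w = winding_number (gamr 1) w"
    by (rule winding_number_homotopic_loops)
  also have "\<dots> = 0"
  proof (rule winding_number_zero_outside[of _ "closed_segment (-1) 1"])
    show "path (gamr 1)" by (rule path_gamr)
    show "convex (closed_segment (-1::complex) 1)" by (rule convex_closed_segment)
    show "pathfinish (gamr 1) = pathstart (gamr 1)" unfolding pathfinish_def pathstart_def by (rule gamr_loop)
    show "w \<notin> closed_segment (-1) 1" using seg_in_region[of \<rho>] rho w by auto
    show "path_image (gamr 1) \<subseteq> closed_segment (-1) 1"
      unfolding path_image_def gamr1_real by (auto intro!: real_in_seg)
  qed
  finally show ?thesis .
qed

lemma winding_inside:
  assumes rho: "\<rho> > 1" and x: "\<bar>x\<bar> \<le> 1"
  shows "winding_number (gamr \<rho>) (of_real x) = 1"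
proof -
  define a where "a = (\<rho> + 1/\<rho>) / 2"
  define b where "b = (\<rho> - 1/\<rho>) / 2"
  have ab: "a > 1" "b > 0"
  proof -
    have "1/\<rho> < 1" using rho by simp
    moreover have "\<rho> + 1/\<rho> > 2"
    proof -
      have "(\<rho> - 1)^2 / \<rho> > 0" using rho by simp
      moreover have "(\<rho> - 1)^2 / \<rho> = \<rho> + 1/\<rho> - 2" using rho by (simp add: field_simps power2_eq_square)
      ultimately show ?thesis by simp
    qed
    moreover have "1/\<rho> < \<rho>" using \<open>1/\<rho> < 1\<close> rho by linarith
    ultimately show "a > 1" "b > 0" unfolding a_def b_def using rho by auto
  qed
  have "homotopic_loops (-{of_real x}) (gamr \<rho>) (circlepath (of_real x) \<rho>)"
  proof (rule homotopic_loops_linear)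
    show "path (gamr \<rho>)" by (rule path_gamr)
    show "path (circlepath (of_real x) \<rho>)" by simp
    show "pathfinish (gamr \<rho>) = pathstart (gamr \<rho>)" unfolding pathfinish_def pathstart_def by (rule gamr_loop)
    show "pathfinish (circlepath (of_real x) \<rho>) = pathstart (circlepath (of_real x) \<rho>)" by simp
    fix \<tau> :: real assume "\<tau> \<in> {0..1}"
    show "closed_segment (gamr \<rho> \<tau>) (circlepath (of_real x) \<rho> \<tau>) \<subseteq> - {of_real x}"
    proof
      fix z assume "z \<in> closed_segment (gamr \<rho> \<tau>) (circlepath (of_real x) \<rho> \<tau>)"
      then obtain u where u: "0 \<le> u" "u \<le> 1" "z = (1 - u) *\<^sub>R gamr \<rho> \<tau> + u *\<^sub>R circlepath (of_real x) \<rho> \<tau>"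
        unfolding closed_segment_def by blast
      define \<theta> where "\<theta> = 2*pi*\<tau>"
      have cRe: "Re (circlepath (of_real x) \<rho> \<tau>) = x + \<rho> * cos \<theta>"
        and cIm: "Im (circlepath (of_real x) \<rho> \<tau>) = \<rho> * sin \<theta>"
        unfolding circlepath \<theta>_def by (simp_all add: Re_exp Im_exp mult_ac)
      have zRe: "Re z = (1 - u) * (a * cos \<theta>) + u * (x + \<rho> * cos \<theta>)"
        using u(3) cRe gamr_Re[of \<rho> \<tau>] unfolding a_def \<theta>_def by simp
      have "Im z = (1 - u) * Im (gamr \<rho> \<tau>) + u * Im (circlepath (of_real x) \<rho> \<tau>)"
        using u(3) by simp
      also have "\<dots> = (1 - u) * (b * sin \<theta>) + u * (\<rho> * sin \<theta>)"
        unfolding gamr_Im cIm b_def \<theta>_def by simp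
      also have "\<dots> = ((1 - u) * b + u * \<rho>) * sin \<theta>" by (simp add: algebra_simps)
      finally have zIm: "Im z = ((1 - u) * b + u * \<rho>) * sin \<theta>" .
      show "z \<in> - {of_real x}"
      proof
        assume "z \<in> {of_real x}"
        then have zx: "Re z = x" "Im z = 0" by auto
        have pos: "(1 - u) * b + u * \<rho> > 0"
        proof (cases "u = 0")
          case True then show ?thesis using ab by simp
        next
          case False then have "u * \<rho> > 0" using u rho by simp
          moreover have "(1 - u) * b \<ge> 0" using u ab by simp
          ultimately show ?thesis by linarith
        qed
        have "sin \<theta> = 0" using zx zIm pos by simp
        then have "cos \<theta> = 1 \<or> cos \<theta> = -1" using sin_cos_squared_add[of \<theta>]
          by (simp add: power2_eq_square) (metis minus_one_mult_self mult_cancel_left2 square_eq_iff)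
        then show False
        proof
          assume c: "cos \<theta> = 1"
          then have "(1 - u) * (a - x) + u * \<rho> = 0" using zRe zx by (simp add: algebra_simps)
          moreover have "(1 - u) * (a - x) \<ge> 0" using u ab x by simp
          moreover have "u * \<rho> \<ge> 0" using u rho by simp
          ultimately have "(1 - u) * (a - x) = 0" "u * \<rho> = 0" by linarith+
          then show False using ab x rho by auto
        next
          assume c: "cos \<theta> = -1"
          then have "(1 - u) * (a + x) + u * \<rho> = 0" using zRe zx by (simp add: algebra_simps)
          moreover have "(1 - u) * (a + x) \<ge> 0" using u ab x by simp
          moreover have "u * \<rho> \<ge> 0" using u rho by simp
          ultimately have "(1 - u) * (a + x) = 0" "u * \<rho> = 0" by linarith+
          then show False using ab x rho by auto
        qed
      qed
    qed
  qed
  then have "winding_number (gamr \<rho>) (of_real x) = winding_number (circlepath (of_real x) \<rho>) (of_real x)"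
    by (rule winding_number_homotopic_loops)
  also have "\<dots> = 1" using rho by (intro winding_number_circlepath_centre) simp
  finally show ?thesis .
qed


lemma Gamma_plus1_real: "(x::real) > 0 \<Longrightarrow> Gamma (x + 1) = x * Gamma x"
  by (rule Gamma_plus1) (auto dest: nonpos_Ints_nonpos)

lemma beta_Gamma: "(real n + 1/2) * beta n = sqrt pi * Gamma (real n + 1) / Gamma (real n + 1/2)"
proof (induction n)
  case 0 then show ?case by (simp add: Gamma_one_half_real)
next
  case (Suc n)
  have g1: "Gamma (real (Suc n) + 1) = (real n + 1) * Gamma (real n + 1)"
    using Gamma_plus1_real[of "real n + 1"] by (simp add: add.commute)
  have g2: "Gamma (real (Suc n) + 1/2) = (real n + 1/2) * Gamma (real n + 1/2)"
    using Gamma_plus1_real[of "real n + 1/2"] by (simp add: algebra_simps)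
  have pos: "Gamma (real n + 1/2) > 0" by (intro Gamma_real_pos) simp
  have "(real (Suc n) + 1/2) * beta (Suc n) = (real n + 1) * beta n"
    by (simp add: divide_simps) (simp add: algebra_simps)
  also have "\<dots> = (real n + 1) / (real n + 1/2) * ((real n + 1/2) * beta n)"
    by (simp add: divide_simps)
  also have "\<dots> = sqrt pi * Gamma (real (Suc n) + 1) / Gamma (real (Suc n) + 1/2)"
    unfolding Suc g1 g2 using pos by (simp add: divide_simps)
  finally show ?case .
qed

lemma Gamma_ratio: "Gamma (real n + 1) \<le> sqrt (real n + 1/2) * Gamma (real n + 1/2)"
proof -
  have "(ln \<circ> Gamma) ((1 - 1/2) *\<^sub>R (real n + 1/2) + (1/2) *\<^sub>R (real n + 3/2))
      \<le> (1 - 1/2) * (ln \<circ> Gamma) (real n + 1/2) + (1/2) * (ln \<circ> Gamma) (real n + 3/2)"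
    by (rule convex_onD[OF log_convex_Gamma_real]) auto
  moreover have "(1 - 1/2) *\<^sub>R (real n + 1/2) + (1/2) *\<^sub>R (real n + 3/2) = real n + 1" by (simp add: field_simps)
  ultimately have h: "2 * ln (Gamma (real n + 1)) \<le> ln (Gamma (real n + 1/2)) + ln (Gamma (real n + 3/2))"
    by simp
  have p1: "Gamma (real n + 1) > 0" "Gamma (real n + 1/2) > 0" "Gamma (real n + 3/2) > 0"
    by (intro Gamma_real_pos; simp)+
  have g: "Gamma (real n + 3/2) = (real n + 1/2) * Gamma (real n + 1/2)"
    using Gamma_plus1_real[of "real n + 1/2"] by (simp add: algebra_simps)
  have e1: "Gamma (real n + 1) ^ 2 = exp (2 * ln (Gamma (real n + 1)))"
    using p1 by (simp add: exp_double)
  have e2: "Gamma (real n + 1/2) * Gamma (real n + 3/2) = exp (ln (Gamma (real n + 1/2)) + ln (Gamma (real n + 3/2)))"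
    using p1 by (simp add: exp_add)
  have "Gamma (real n + 1) ^ 2 \<le> Gamma (real n + 1/2) * Gamma (real n + 3/2)"
    unfolding e1 e2 using h by simp
  also have "\<dots> = (real n + 1/2) * Gamma (real n + 1/2)^2"
    unfolding g by (simp add: power2_eq_square)
  also have "\<dots> = (sqrt (real n + 1/2) * Gamma (real n + 1/2))^2"
    by (simp add: power_mult_distrib)
  finally have sq: "Gamma (real n + 1) ^ 2 \<le> (sqrt (real n + 1/2) * Gamma (real n + 1/2))^2" .
  have nn: "0 \<le> sqrt (real n + 1/2) * Gamma (real n + 1/2)"
    using p1(2) by (intro mult_nonneg_nonneg) auto
  show ?thesis by (rule power2_le_imp_le[OF sq nn])
qed

lemma cn_bound: assumes n: "n \<ge> 1"
  shows "(real n + 1/2) * beta n \<le> Gamma (1/2) * sqrt (real n) * Upsilon n 1 (1/2)"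
proof -
  have p: "Gamma (real n + 1/2) > 0" by (intro Gamma_real_pos) simp
  have s1: "(real n + 1/2) * beta n \<le> sqrt pi * sqrt (real n + 1/2)"
    unfolding beta_Gamma using Gamma_ratio[of n] p by (simp add: divide_simps mult_left_mono)
  have s2: "sqrt (real n + 1/2) \<le> sqrt (real n) * exp (1 / (4 * real n))"
  proof -
    have "1 + 1 / (2 * real n) \<le> exp (1 / (2 * real n))" by (rule exp_ge_add_one_self)
    also have "exp (1 / (2 * real n)) = exp (1 / (4 * real n))^2"
      by (simp add: exp_double[symmetric] power2_eq_square exp_add[symmetric])
    finally have "real n * (1 + 1 / (2 * real n)) \<le> real n * exp (1 / (4 * real n))^2"
      using n by (intro mult_left_mono) auto
    moreover have "real n + 1/2 = real n * (1 + 1 / (2 * real n))" using n by (simp add: field_simps)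
    moreover have "(sqrt (real n) * exp (1 / (4 * real n)))^2 = real n * exp (1 / (4 * real n))^2"
      by (simp add: power_mult_distrib)
    ultimately have "real n + 1/2 \<le> (sqrt (real n) * exp (1 / (4 * real n)))^2" by simp
    then show ?thesis by (intro real_le_lsqrt) auto
  qed
  have s3: "exp (1 / (4 * real n)) \<le> Upsilon n 1 (1/2)"
  proof -
    have e1: "(1 - 1/2) / (2 * (real n + 1/2 - 1)) = 1 / (4 * real n - 2)" by (simp add: field_simps)
    have e2: "1 / (12 * (real n + 1 - 1)) = 1 / (12 * real n)" by simp
    have e3: "(1 - 1) * (1 - 1/2) / real n = 0" by simp
    have h1: "1 / (4 * real n) \<le> 1 / (4 * real n - 2)"
      using n by (intro divide_left_mono) auto
    have h2: "0 \<le> 1 / (12 * real n)" by simp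
    have "1 / (4 * real n) \<le> 1 / (4 * real n - 2) + 1 / (12 * real n) + 0" using h1 h2 by linarith
    then show ?thesis unfolding Upsilon_def e1 e2 e3 by simp
  qed
  have "sqrt (real n) * exp (1 / (4 * real n)) \<le> sqrt (real n) * Upsilon n 1 (1/2)"
    using s3 by (intro mult_left_mono) auto
  with s2 have "sqrt (real n + 1/2) \<le> sqrt (real n) * Upsilon n 1 (1/2)" by linarith
  then have "sqrt pi * sqrt (real n + 1/2) \<le> sqrt pi * (sqrt (real n) * Upsilon n 1 (1/2))"
    by (intro mult_left_mono) auto
  from order_trans[OF s1 this] show ?thesis by (simp only: Gamma_one_half_real mult_ac)
qed

lemma gamr'_Re: "Re (gamr' r \<tau>) = - pi * (r + 1/r) * sin (2*pi*\<tau>)"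
  unfolding gamr'_def by (simp add: Re_exp Im_exp field_simps)

lemma gamr'_Im: "Im (gamr' r \<tau>) = pi * (r - 1/r) * cos (2*pi*\<tau>)"
  unfolding gamr'_def by (simp add: Re_exp Im_exp field_simps)

lemma ineq_aux:
  fixes a b \<sigma> c :: real
  assumes "0 \<le> b" "b \<le> a" "0 \<le> \<sigma>" "\<sigma> \<le> 1" "c^2 = 1 - \<sigma>^2"
  shows "a^2 * \<sigma>^2 + b^2 * c^2 \<le> (a * \<sigma> + b * (1 - \<sigma>))^2"
proof -
  have "0 \<le> 2 * b * \<sigma> * (1 - \<sigma>) * (a - b)" using assms by (intro mult_nonneg_nonneg) auto
  moreover have "(a * \<sigma> + b * (1 - \<sigma>))^2 - (a^2 * \<sigma>^2 + b^2 * (1 - \<sigma>^2)) = 2 * b * \<sigma> * (1 - \<sigma>) * (a - b)"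
    by (simp add: algebra_simps power2_eq_square)
  ultimately show ?thesis unfolding assms(5) by linarith
qed

lemma gamr'_bound:
  assumes r: "r \<ge> 1"
  shows "norm (gamr' r \<tau>) \<le> 2 * pi * ((r + 1/r)/2 * \<bar>sin (2*pi*\<tau>)\<bar> + (r - 1/r)/2 * (1 - \<bar>sin (2*pi*\<tau>)\<bar>))"
proof -
  define a where "a = (r + 1/r)/2"
  define b where "b = (r - 1/r)/2"
  define \<sigma> where "\<sigma> = \<bar>sin (2*pi*\<tau>)\<bar>"
  define c where "c = cos (2*pi*\<tau>)"
  have rr: "1/r \<le> 1" using r by simp
  have rr2: "1/r \<le> r" using rr r by linarith
  have ab: "0 \<le> b" "b \<le> a" unfolding a_def b_def using r rr2 by auto
  have sg: "0 \<le> \<sigma>" "\<sigma> \<le> 1" unfolding \<sigma>_def by auto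
  have cs: "c^2 = 1 - \<sigma>^2" unfolding c_def \<sigma>_def by (simp add: cos_squared_eq)
  have "norm (gamr' r \<tau>) = sqrt ((2*pi)^2 * (a^2 * \<sigma>^2 + b^2 * c^2))"
  proof -
    have re: "Re (gamr' r \<tau>) = - ((2*pi) * (a * sin (2*pi*\<tau>)))"
      unfolding gamr'_Re a_def by (simp add: field_simps)
    have im: "Im (gamr' r \<tau>) = (2*pi) * (b * c)"
      unfolding gamr'_Im b_def c_def by (simp add: field_simps)
    have sq: "(sin (2*pi*\<tau>))^2 = \<sigma>^2" unfolding \<sigma>_def by simp
    show ?thesis unfolding cmod_def re im power2_minus power_mult_distrib sq
      by (simp add: algebra_simps)
  qed
  also have "\<dots> \<le> sqrt ((2*pi)^2 * (a * \<sigma> + b * (1 - \<sigma>))^2)"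
    using ineq_aux[OF ab sg cs] by (intro real_sqrt_le_mono mult_left_mono) auto
  also have "\<dots> = 2*pi * (a * \<sigma> + b * (1 - \<sigma>))"
    using ab sg by (simp add: real_sqrt_mult pi_gt_zero less_imp_le)
  finally show ?thesis unfolding a_def b_def \<sigma>_def .
qed

lemma abs_sin_int: "((\<lambda>\<tau>. \<bar>sin (2*pi*\<tau>)\<bar>) has_integral 2/pi) {0..1}"
proof -
  have i1: "((\<lambda>\<tau>. sin (2*pi*\<tau>)) has_integral ((- cos (2*pi*(1/2)) / (2*pi)) - (- cos (2*pi*0) / (2*pi)))) {0..1/2}"
    by (rule fundamental_theorem_of_calculus)
       (auto intro!: derivative_eq_intros simp: has_real_derivative_iff_has_vector_derivative[symmetric])
  have i2: "((\<lambda>\<tau>. - sin (2*pi*\<tau>)) has_integral ((cos (2*pi*1) / (2*pi)) - (cos (2*pi*(1/2)) / (2*pi)))) {1/2..1}"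
    by (rule fundamental_theorem_of_calculus)
       (auto intro!: derivative_eq_intros simp: has_real_derivative_iff_has_vector_derivative[symmetric])
  have j1: "((\<lambda>\<tau>. \<bar>sin (2*pi*\<tau>)\<bar>) has_integral 1/pi) {0..1/2}"
  proof (rule has_integral_eq[rotated])
    show "((\<lambda>\<tau>. sin (2*pi*\<tau>)) has_integral 1/pi) {0..1/2}" using i1 by simp
    fix x :: real assume "x \<in> {0..1/2}"
    then have "sin (2*pi*x) \<ge> 0" by (intro sin_ge_zero) auto
    then show "sin (2*pi*x) = \<bar>sin (2*pi*x)\<bar>" by simp
  qed
  have j2: "((\<lambda>\<tau>. \<bar>sin (2*pi*\<tau>)\<bar>) has_integral 1/pi) {1/2..1}"
  proof (rule has_integral_eq[rotated])
    show "((\<lambda>\<tau>. - sin (2*pi*\<tau>)) has_integral 1/pi) {1/2..1}" using i2 by simp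
    fix x :: real assume "x \<in> {1/2..1}"
    then have "sin (2*pi*x) \<le> 0"
    proof (cases "x = 1")
      case False then show ?thesis using \<open>x \<in> {1/2..1}\<close> by (intro sin_le_zero) auto
    qed simp
    then show "- sin (2*pi*x) = \<bar>sin (2*pi*x)\<bar>" by simp
  qed
  from has_integral_combine[OF _ _ j1 j2] show ?thesis by simp
qed

lemma bound_int:
  "((\<lambda>\<tau>. 2*pi*(a * \<bar>sin (2*pi*\<tau>)\<bar> + b * (1 - \<bar>sin (2*pi*\<tau>)\<bar>))) has_integral (4*a + (2*pi - 4)*b)) {0..1}"
proof -
  have "((\<lambda>\<tau>. 2*pi*(a * \<bar>sin (2*pi*\<tau>)\<bar> + b * (1 - \<bar>sin (2*pi*\<tau>)\<bar>))) has_integral (2*pi*(a * (2/pi) + b * (1 - 2/pi)))) {0..1}"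
    using has_integral_const_real[of "1::real" 0 1]
    by (intro has_integral_mult_right has_integral_add has_integral_diff abs_sin_int) auto
  moreover have "2*pi*(a * (2/pi) + b * (1 - 2/pi)) = 4*a + (2*pi - 4)*b"
    by (simp add: field_simps)
  ultimately show ?thesis by simp
qed


lemma gamr_ne_real:
  assumes rho: "\<rho> > 1" shows "gamr \<rho> \<tau> \<noteq> of_real (cos \<phi>)"
proof -
  have t: "tpar \<rho> \<tau> \<noteq> 0" "norm (tpar \<rho> \<tau>) < 1"
    using tpar_norm[of \<rho> \<tau>] rho by auto
  show ?thesis using den_ne[OF t, of \<phi>] gamr_t[of \<rho> \<tau>] rho by auto
qed

lemma cauchy_rep:
  assumes rho: "\<rho> > 1" and U: "open U" "bernstein_region \<rho> \<subseteq> U" and hol: "f holomorphic_on U"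
  shows "((\<lambda>\<tau>. f (gamr \<rho> \<tau>) / (gamr \<rho> \<tau> - of_real (cos \<phi>)) * gamr' \<rho> \<tau>)
          has_integral (2 * pi * \<i> * f (of_real (cos \<phi>)))) {0..1}"
proof -
  have xU: "of_real (cos \<phi>) \<in> U" using real_in_region[of "cos \<phi>" \<rho>] rho U by auto
  have pim: "path_image (gamr \<rho>) \<subseteq> U - {of_real (cos \<phi>)}"
  proof -
    have "path_image (gamr \<rho>) \<subseteq> U"
      using path_image_gamr[of \<rho>] ell_sub_region[of \<rho> \<rho>] rho U by auto
    moreover have "of_real (cos \<phi>) \<notin> path_image (gamr \<rho>)"
      unfolding path_image_def using gamr_ne_real[OF rho] by (metis imageE)
    ultimately show ?thesis by auto
  qed
  have "((\<lambda>w. f w / (w - of_real (cos \<phi>))) has_contour_integral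
          (2*pi * \<i> * winding_number (gamr \<rho>) (of_real (cos \<phi>)) * f (of_real (cos \<phi>)))) (gamr \<rho>)"
  proof (rule Cauchy_integral_formula_global[OF U(1) hol xU valid_gamr pim])
    show "pathfinish (gamr \<rho>) = pathstart (gamr \<rho>)" unfolding pathfinish_def pathstart_def by (rule gamr_loop)
    fix w assume "w \<notin> U"
    then have "w \<notin> bernstein_region \<rho>" using U by auto
    then show "winding_number (gamr \<rho>) w = 0" by (rule winding_outside[OF rho])
  qed
  moreover have "winding_number (gamr \<rho>) (of_real (cos \<phi>)) = 1"
    by (rule winding_inside[OF rho]) simp
  ultimately have hc: "((\<lambda>w. f w / (w - of_real (cos \<phi>))) has_contour_integral (2*pi * \<i> * f (of_real (cos \<phi>)))) (gamr \<rho>)"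
    by simp
  have vd: "vector_derivative (gamr \<rho>) (at \<tau> within {0..1}) = gamr' \<rho> \<tau>" if "\<tau> \<in> {0..1}" for \<tau>
    by (rule vector_derivative_within_closed_interval) (use that gamr_deriv in auto)
  show ?thesis
    using hc unfolding has_contour_integral_def
    by (rule has_integral_eq[rotated]) (simp add: vd)
qed

lemma subst_leg:
  fixes f :: "complex \<Rightarrow> complex"
  assumes contf: "continuous_on (of_real ` {-1..1}) f"
  shows "integral {-1..1} (\<lambda>x. f (of_real x) * of_real (legendreP n x))
       = integral {0..pi} (\<lambda>\<phi>. of_real (sin \<phi>) * (f (of_real (cos \<phi>)) * of_real (legendreP n (cos \<phi>))))"
proof -
  define h where "h x = f (of_real x) * of_real (legendreP n x)" for x :: real
  have hc: "continuous_on {-1..1} h"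
  proof -
    have c1: "continuous_on {-1..1} (\<lambda>x::real. f (of_real x))"
      by (rule continuous_on_compose2[OF contf continuous_on_of_real_id]) auto
    have c2: "continuous_on {-1..1} (\<lambda>x. (of_real (legendreP n x) :: complex))"
      by (intro continuous_on_of_real legendreP_cont)
    show ?thesis unfolding h_def by (rule continuous_on_mult[OF c1 c2])
  qed
  have "((\<lambda>x. (- sin x) *\<^sub>R h (cos x)) has_integral (integral {cos 0..cos pi} h - integral {cos pi..cos 0} h)) {0..pi}"
    by (rule has_integral_substitution_general[of "{}" 0 pi cos "-1" 1 h "\<lambda>x. - sin x"])
       (auto intro!: continuous_intros derivative_eq_intros hc)
  then have "((\<lambda>x. (- sin x) *\<^sub>R h (cos x)) has_integral (- integral {-1..1} h)) {0..pi}" by simp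
  then have "((\<lambda>x. - ((- sin x) *\<^sub>R h (cos x))) has_integral (- (- integral {-1..1} h))) {0..pi}"
    by (rule has_integral_neg)
  then have "((\<lambda>\<phi>. of_real (sin \<phi>) * (f (of_real (cos \<phi>)) * of_real (legendreP n (cos \<phi>)))) has_integral (integral {-1..1} h)) {0..pi}"
    unfolding h_def by (simp add: scaleR_conv_of_real)
  then show ?thesis unfolding h_def by (rule integral_unique[symmetric])
qed

lemma final_arith:
  assumes rho: "\<rho> > 1" and M0: "M \<ge> 0" and n: "n \<ge> 1"
  shows "(real n + 1/2) * (M * (2 * beta n * (1/\<rho>)^(n+1) * (1 - (1/\<rho>)^2) powr (-1/2))
            * (4 * ((\<rho> + 1/\<rho>)/2) + (2*pi - 4) * ((\<rho> - 1/\<rho>)/2))) / (2*pi)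
         \<le> Lambda_half n \<rho> M / sqrt (\<rho>^2 - 1) * sqrt (real n) / \<rho>^n"
proof -
  define Q where "Q = 2 * (\<rho> + 1/\<rho>) + 2 * (pi/2 - 1) * (\<rho> - 1/\<rho>)"
  have Qeq: "4 * ((\<rho> + 1/\<rho>)/2) + (2*pi - 4) * ((\<rho> - 1/\<rho>)/2) = Q"
    unfolding Q_def using rho by (simp add: field_simps)
  have rinv: "1/\<rho> < 1" using rho by simp
  have Q0: "Q \<ge> 0"
  proof -
    have "pi/2 - 1 \<ge> 0" using pi_gt3 by simp
    moreover have "\<rho> - 1/\<rho> \<ge> 0" using rinv rho by linarith
    moreover have "\<rho> + 1/\<rho> \<ge> 0" using rho by simp
    ultimately show ?thesis unfolding Q_def by simp
  qed
  have r2: "\<rho>^2 - 1 > 0" using rho by (simp add: power2_eq_square) (smt (verit) mult_less_cancel_left1)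
  have pw: "(1 - (1/\<rho>)^2) powr (-1/2) = \<rho> / sqrt (\<rho>^2 - 1)"
  proof -
    have e: "1 - (1/\<rho>)^2 = (\<rho>^2 - 1) / \<rho>^2" using rho by (simp add: field_simps)
    have pos: "(\<rho>^2 - 1) / \<rho>^2 > 0" using r2 rho by simp
    have "(1 - (1/\<rho>)^2) powr (-1/2) = 1 / sqrt ((\<rho>^2 - 1) / \<rho>^2)"
      unfolding e using pos by (simp add: powr_minus_divide powr_half_sqrt)
    also have "\<dots> = \<rho> / sqrt (\<rho>^2 - 1)"
      using rho by (simp add: real_sqrt_divide)
    finally show ?thesis .
  qed
  have sq: "sqrt (\<rho>^2 - 1) > 0" using r2 by simp
  have rn: "\<rho>^n > 0" using rho by simp
  define W where "W = M * Q / (pi * (\<rho>^n * sqrt (\<rho>^2 - 1)))"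
  have W0: "W \<ge> 0" unfolding W_def using M0 Q0 rho r2 by (simp add: pi_gt_zero)
  have lhs: "(real n + 1/2) * (M * (2 * beta n * (1/\<rho>)^(n+1) * (1 - (1/\<rho>)^2) powr (-1/2))
            * (4 * ((\<rho> + 1/\<rho>)/2) + (2*pi - 4) * ((\<rho> - 1/\<rho>)/2))) / (2*pi)
        = ((real n + 1/2) * beta n) * W"
  proof -
    have x: "2 * beta n * (1/\<rho>)^(n+1) * (\<rho> / sqrt (\<rho>^2 - 1)) = 2 * beta n * (1 / (\<rho>^n * sqrt (\<rho>^2 - 1)))"
      using rho by (simp add: power_one_over)
    have ar: "c * (M * (2 * b * (1/D)) * Q) / (2*pi) = (c*b) * (M*Q/(pi*D))" if "D > 0" for c b D :: real
      using that pi_gt_zero by (simp add: divide_simps)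
    show ?thesis unfolding Qeq pw x W_def by (rule ar) (use sq rn in simp)
  qed
  have rhs: "Lambda_half n \<rho> M / sqrt (\<rho>^2 - 1) * sqrt (real n) / \<rho>^n
        = (Gamma (1/2) * sqrt (real n) * Upsilon n 1 (1/2)) * W"
    unfolding Lambda_half_def W_def Q_def using rho r2 sq rn pi_gt_zero by (simp add: field_simps)
  show ?thesis unfolding lhs rhs by (rule mult_right_mono[OF cn_bound[OF n] W0])
qed

theorem corollary4p4:
  fixes f :: "complex \<Rightarrow> complex" and \<rho> :: real and n :: nat
  assumes "\<rho> > 1"
    and "f analytic_on bernstein_region \<rho>"
    and "M = (SUP z\<in>bernstein_ellipse \<rho>. cmod (f z))"
    and "n \<ge> 1"
  shows "cmod (legendre_coeff f n) \<le> Lambda_half n \<rho> M / sqrt (\<rho>^2 - 1) * sqrt (real n) / \<rho>^n"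
proof -
  note rho = assms(1) and an = assms(2) and Mdef = assms(3) and n = assms(4)
  from an obtain U where U: "open U" "bernstein_region \<rho> \<subseteq> U" "f holomorphic_on U"
    using analytic_on_holomorphic by blast
  have contU: "continuous_on U f" using U(3) holomorphic_on_imp_continuous_on by blast
  have ellU: "bernstein_ellipse \<rho> \<subseteq> U" using ell_sub_region[of \<rho> \<rho>] rho U(2) by auto
  have realU: "of_real ` {-1..1} \<subseteq> U" using real_in_region[of _ \<rho>] rho U(2) by fastforce
  have contR: "continuous_on (of_real ` {-1..1}) f" using contU realU continuous_on_subset by blast
  have gU: "gamr \<rho> \<tau> \<in> U" if "\<tau> \<in> {0..1}" for \<tau> using gamr_ell[OF that] ellU by auto

  have Ecomp: "compact (bernstein_ellipse \<rho>)"
  proof -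
    have "continuous_on {0..2*pi} (\<lambda>\<theta>::real. (of_real \<rho> * exp (\<i> * of_real \<theta>) + of_real (1/\<rho>) * exp (- \<i> * of_real \<theta>)) / 2)"
      using rho by (auto intro!: continuous_intros)
    then show ?thesis unfolding bernstein_ellipse_def by (intro compact_continuous_image compact_Icc)
  qed
  have bdd: "bdd_above ((\<lambda>z. cmod (f z)) ` bernstein_ellipse \<rho>)"
  proof -
    have "continuous_on (bernstein_ellipse \<rho>) (\<lambda>z. cmod (f z))"
      using continuous_on_subset[OF contU ellU] by (intro continuous_intros)
    then have "compact ((\<lambda>z. cmod (f z)) ` bernstein_ellipse \<rho>)"
      using compact_continuous_image Ecomp by blast
    then show ?thesis by (intro bounded_imp_bdd_above compact_imp_bounded)
  qed
  have Mb: "cmod (f z) \<le> M" if "z \<in> bernstein_ellipse \<rho>" for z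
    unfolding Mdef by (rule cSUP_upper[OF that bdd])
  have M0: "M \<ge> 0" using Mb[OF gamr_ell[of 0 \<rho>]] by (intro order_trans[OF norm_ge_zero]) auto

  define P where "P \<phi> = (of_real (legendreP n (cos \<phi>)) :: complex)" for \<phi>
  define Hf where "Hf \<phi> \<tau> = P \<phi> * (of_real (sin \<phi>) / (gamr \<rho> \<tau> - of_real (cos \<phi>))) * (f (gamr \<rho> \<tau>) * gamr' \<rho> \<tau>)" for \<phi> \<tau>
  define Ker where "Ker \<tau> = integral {0..pi} (\<lambda>\<phi>. P \<phi> * (of_real (sin \<phi>) / (gamr \<rho> \<tau> - of_real (cos \<phi>))))" for \<tau>

  have contfg: "continuous_on S (\<lambda>p. f (gamr \<rho> (g p)))" if "continuous_on S g" "g ` S \<subseteq> {0..1}" for S g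
    by (rule continuous_on_compose2[OF contU continuous_on_compose2[OF gamr_cont that(1) subset_refl]])
       (use that(2) gU in auto)
  have contH: "continuous_on (cbox (0,0) (pi,1)) (\<lambda>(\<phi>,\<tau>). Hf \<phi> \<tau>)"
  proof -
    have sub: "snd ` cbox (0::real, 0::real) (pi, 1) \<subseteq> {0..1}" by (auto simp: cbox_Pair_eq)
    have c1: "continuous_on (cbox (0,0) (pi,1)) (\<lambda>p::real\<times>real. f (gamr \<rho> (snd p)))"
      by (rule contfg[OF continuous_on_snd[OF continuous_on_id] sub])
    have c2: "continuous_on (cbox (0,0) (pi,1)) (\<lambda>p::real\<times>real. P (fst p))"
      unfolding P_def
      by (intro continuous_on_of_real continuous_on_compose2[OF legendreP_cont_cos continuous_on_fst[OF continuous_on_id]]) auto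
    have c3: "continuous_on (cbox (0,0) (pi,1)) (\<lambda>p::real\<times>real. gamr \<rho> (snd p))"
      by (rule continuous_on_compose2[OF gamr_cont continuous_on_snd[OF continuous_on_id]]) auto
    have c4: "continuous_on (cbox (0,0) (pi,1)) (\<lambda>p::real\<times>real. gamr' \<rho> (snd p))"
      by (rule continuous_on_compose2[OF gamr'_cont continuous_on_snd[OF continuous_on_id]]) auto
    have c5: "continuous_on (cbox (0,0) (pi,1)) (\<lambda>p::real\<times>real. of_real (sin (fst p)) / (gamr \<rho> (snd p) - of_real (cos (fst p))))"
      using gamr_ne_real[OF rho] by (intro continuous_intros c3) auto
    show ?thesis unfolding Hf_def case_prod_unfold
      by (intro continuous_on_mult c1 c2 c4 c5)
  qed
  have contH': "continuous_on (cbox (0,0) (1,pi)) (\<lambda>(\<tau>,\<phi>). Hf \<phi> \<tau>)"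
  proof -
    have "continuous_on (cbox (0,0) (1,pi)) ((\<lambda>(\<phi>,\<tau>). Hf \<phi> \<tau>) \<circ> (\<lambda>(\<tau>,\<phi>). (\<phi>,\<tau>)))"
      by (rule continuous_on_compose[OF _ continuous_on_subset[OF contH]])
         (auto simp: case_prod_unfold cbox_Pair_eq intro!: continuous_intros)
    then show ?thesis by (simp add: comp_def case_prod_unfold)
  qed

  have I1: "integral {-1..1} (\<lambda>x. f (of_real x) * of_real (legendreP n x))
      = integral {0..pi} (\<lambda>\<phi>. integral {0..1} (\<lambda>\<tau>. Hf \<phi> \<tau>)) / (2*pi*\<i>)"
  proof -
    have "integral {-1..1} (\<lambda>x. f (of_real x) * of_real (legendreP n x))
        = integral {0..pi} (\<lambda>\<phi>. of_real (sin \<phi>) * (f (of_real (cos \<phi>)) * P \<phi>))"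
      unfolding P_def by (rule subst_leg[OF contR])
    also have "\<dots> = integral {0..pi} (\<lambda>\<phi>. integral {0..1} (\<lambda>\<tau>. Hf \<phi> \<tau>) / (2*pi*\<i>))"
    proof (rule integral_cong)
      fix \<phi>
      have ci: "integral {0..1} (\<lambda>\<tau>. f (gamr \<rho> \<tau>) / (gamr \<rho> \<tau> - of_real (cos \<phi>)) * gamr' \<rho> \<tau>)
          = 2 * pi * \<i> * f (of_real (cos \<phi>))"
        by (rule integral_unique[OF cauchy_rep[OF rho U]])
      have "integral {0..1} (\<lambda>\<tau>. Hf \<phi> \<tau>)
          = integral {0..1} (\<lambda>\<tau>. (P \<phi> * of_real (sin \<phi>)) * (f (gamr \<rho> \<tau>) / (gamr \<rho> \<tau> - of_real (cos \<phi>)) * gamr' \<rho> \<tau>))"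
        unfolding Hf_def by (rule integral_cong) (simp add: divide_inverse mult_ac)
      also have "\<dots> = (P \<phi> * of_real (sin \<phi>)) * (2 * pi * \<i> * f (of_real (cos \<phi>)))"
        unfolding integral_mult_right ci ..
      finally have X: "integral {0..1} (\<lambda>\<tau>. Hf \<phi> \<tau>) = (P \<phi> * of_real (sin \<phi>)) * (2 * pi * \<i> * f (of_real (cos \<phi>)))" .
      have nz: "(2 * pi * \<i> :: complex) \<noteq> 0" using pi_gt_zero by simp
      have "(P \<phi> * of_real (sin \<phi>)) * (2 * pi * \<i> * f (of_real (cos \<phi>))) / (2*pi*\<i>)
          = (P \<phi> * of_real (sin \<phi>)) * f (of_real (cos \<phi>)) * ((2 * pi * \<i>) / (2*pi*\<i>))"
        by (simp only: times_divide_eq_right mult_ac)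
      also have "\<dots> = (P \<phi> * of_real (sin \<phi>)) * f (of_real (cos \<phi>))" using nz by simp
      finally show "of_real (sin \<phi>) * (f (of_real (cos \<phi>)) * P \<phi>) = integral {0..1} (\<lambda>\<tau>. Hf \<phi> \<tau>) / (2*pi*\<i>)"
        unfolding X by (simp add: mult_ac)
    qed
    also have "\<dots> = integral {0..pi} (\<lambda>\<phi>. integral {0..1} (\<lambda>\<tau>. Hf \<phi> \<tau>)) / (2*pi*\<i>)"
      by (rule integral_divide)
    finally show ?thesis .
  qed
  have swap: "integral {0..pi} (\<lambda>\<phi>. integral {0..1} (\<lambda>\<tau>. Hf \<phi> \<tau>))
      = integral {0..1} (\<lambda>\<tau>. integral {0..pi} (\<lambda>\<phi>. Hf \<phi> \<tau>))"
    using integral_swap_continuous[of 0 0 pi 1 Hf] contH by (simp add: cbox_interval)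
  have inner: "integral {0..pi} (\<lambda>\<phi>. Hf \<phi> \<tau>) = Ker \<tau> * (f (gamr \<rho> \<tau>) * gamr' \<rho> \<tau>)" for \<tau>
    unfolding Hf_def Ker_def by (rule integral_mult_left)
  have intble: "(\<lambda>\<tau>. integral {0..pi} (\<lambda>\<phi>. Hf \<phi> \<tau>)) integrable_on {0..1}"
    using integral_integrable_2dim[of 0 0 1 pi "\<lambda>(\<tau>,\<phi>). Hf \<phi> \<tau>"] contH' by (simp add: cbox_interval)

  define KB where "KB = 2 * beta n * (1/\<rho>)^(n+1) * (1 - (1/\<rho>)^2) powr (-1/2)"
  define a where "a = (\<rho> + 1/\<rho>)/2"
  define b where "b = (\<rho> - 1/\<rho>)/2"
  have Kb: "norm (Ker \<tau>) \<le> KB" for \<tau>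
  proof -
    have t: "tpar \<rho> \<tau> \<noteq> 0" "norm (tpar \<rho> \<tau>) < 1" using tpar_norm[of \<rho> \<tau>] rho by auto
    have "norm (Ker \<tau>) \<le> 2 * beta n * norm (tpar \<rho> \<tau>)^(n+1) * (1 - norm (tpar \<rho> \<tau>)^2) powr (-1/2)"
      unfolding Ker_def P_def gamr_t[of \<rho> \<tau>, OF less_trans[OF zero_less_one rho]]
      by (rule kernel_bound[OF t])
    then show ?thesis unfolding KB_def tpar_norm[of \<rho> \<tau>, OF less_trans[OF zero_less_one rho]] .
  qed
  have KB0: "KB \<ge> 0" unfolding KB_def using beta_pos[of n] rho by (simp add: less_imp_le)
  have bnd: "norm (integral {0..pi} (\<lambda>\<phi>. Hf \<phi> \<tau>)) \<le> M * KB * (2*pi*(a * \<bar>sin (2*pi*\<tau>)\<bar> + b * (1 - \<bar>sin (2*pi*\<tau>)\<bar>)))"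
    if "\<tau> \<in> {0..1}" for \<tau>
  proof -
    have "norm (integral {0..pi} (\<lambda>\<phi>. Hf \<phi> \<tau>)) = norm (Ker \<tau>) * (cmod (f (gamr \<rho> \<tau>)) * norm (gamr' \<rho> \<tau>))"
      unfolding inner by (simp add: norm_mult)
    also have "\<dots> \<le> KB * (M * (2*pi*(a * \<bar>sin (2*pi*\<tau>)\<bar> + b * (1 - \<bar>sin (2*pi*\<tau>)\<bar>))))"
      using Kb[of \<tau>] Mb[OF gamr_ell[OF that]] gamr'_bound[of \<rho> \<tau>] rho M0 KB0
      unfolding a_def b_def
      by (intro mult_mono) auto
    finally show ?thesis by (simp add: mult_ac)
  qed
  have bint: "((\<lambda>\<tau>. M * KB * (2*pi*(a * \<bar>sin (2*pi*\<tau>)\<bar> + b * (1 - \<bar>sin (2*pi*\<tau>)\<bar>)))) has_integral (M * KB * (4*a + (2*pi - 4)*b))) {0..1}"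
    by (intro has_integral_mult_right bound_int)
  have main: "norm (integral {0..1} (\<lambda>\<tau>. integral {0..pi} (\<lambda>\<phi>. Hf \<phi> \<tau>))) \<le> M * KB * (4*a + (2*pi - 4)*b)"
  proof -
    have "norm (integral {0..1} (\<lambda>\<tau>. integral {0..pi} (\<lambda>\<phi>. Hf \<phi> \<tau>)))
        \<le> integral {0..1} (\<lambda>\<tau>. M * KB * (2*pi*(a * \<bar>sin (2*pi*\<tau>)\<bar> + b * (1 - \<bar>sin (2*pi*\<tau>)\<bar>))))"
      by (rule integral_norm_bound_integral[OF intble has_integral_integrable[OF bint] bnd])
    then show ?thesis unfolding integral_unique[OF bint] .
  qed

  have "cmod (legendre_coeff f n) = (real n + 1/2) * norm (integral {0..1} (\<lambda>\<tau>. integral {0..pi} (\<lambda>\<phi>. Hf \<phi> \<tau>))) / (2*pi)"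
  proof -
    have nn: "cmod (of_nat n + 1/2 :: complex) = real n + 1/2"
    proof -
      have "(of_nat n + 1/2 :: complex) = of_real (real n + 1/2)" by simp
      then show ?thesis by (simp only: norm_of_real)
    qed
    show ?thesis unfolding legendre_coeff_def I1 swap by (simp add: norm_mult norm_divide nn)
  qed
  also have "\<dots> \<le> (real n + 1/2) * (M * KB * (4*a + (2*pi - 4)*b)) / (2*pi)"
    using main by (intro divide_right_mono mult_left_mono) auto
  also have "\<dots> \<le> Lambda_half n \<rho> M / sqrt (\<rho>^2 - 1) * sqrt (real n) / \<rho>^n"
    using final_arith[OF rho M0 n] unfolding KB_def a_def b_def by (simp add: mult_ac)
  finally show ?thesis .
qed


end
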